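(* Assume $g$ satisfies (Hg), let $k>0$ and $(a,d)\in(0,1)\times(0,\infty)$. Suppose there exists $A\in(a,1)$ with $$\mathcal J^-(a,d,A,k):=\max_{v\in[0,A]}\big(d(k+1)v-dkA-g(v;a)\big)<0.$$ Then $c(a,d,k)<0$.
   Context: A function $g:\mathbb R\times[0,1]\to\mathbb R$, $(u,a)\mapsto g(u;a)$, satisfies (Hg) if it is $C^1$ and for every $a\in(0,1)$: $g(0;a)=g(a;a)=g(1;a)=0$, $g'(0;a)<0$, $g'(1;a)<0$, $g'(a;a)>0$ (where $g'=\partial_u g$), $g(v;a)>0$ for $v\in(-\infty,0)\cup(a,1)$ and $g(v;a)<0$ for $v\in(0,a)\cup(1,\infty)$. For $k>0$, $a\in(0,1)$, $d>0$ consider the problem: find $c\in\mathbb R$, $\Phi:\mathbb R\to\mathbb R$ with $-c\Phi'(\xi)=d(k\Phi(\xi+1)-(k+1)\Phi(\xi)+\Phi(\xi-1))+g(\Phi(\xi);a)$ for all $\xi$, $\Phi(-\infty)=0$, $\Phi(+\infty)=1$. It is known (Mallet-Paret) that under (Hg) a solution with $\Phi$ non-decreasing exists and the speed $c$ is uniquely determined; it is denoted $c(a,d,k)$. *)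

theory Defs
  imports "HOL-Analysis.Analysis"
begin

text \<open>(Hg): g is C^1 on R x [0,1]; gu is its partial derivative in u (g' in the paper),
  ga its partial derivative in a.\<close>
definition Hg :: "(real \<Rightarrow> real \<Rightarrow> real) \<Rightarrow> bool" where
  "Hg g \<longleftrightarrow>
     (\<exists>gu ga :: real \<Rightarrow> real \<Rightarrow> real.
        (\<forall>u a. a \<in> {0..1} \<longrightarrow>
           ((\<lambda>p. g (fst p) (snd p)) has_derivative (\<lambda>h. gu u a * fst h + ga u a * snd h))
             (at (u, a) within (UNIV \<times> {0..1}))) \<and>
        continuous_on (UNIV \<times> {0..1}) (\<lambda>p. gu (fst p) (snd p)) \<and>
        continuous_on (UNIV \<times> {0..1}) (\<lambda>p. ga (fst p) (snd p)) \<and>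
        (\<forall>a. 0 < a \<and> a < 1 \<longrightarrow>
           g 0 a = 0 \<and> g a a = 0 \<and> g 1 a = 0 \<and>
           gu 0 a < 0 \<and> gu 1 a < 0 \<and> gu a a > 0 \<and>
           (\<forall>v. (v < 0 \<or> (a < v \<and> v < 1)) \<longrightarrow> g v a > 0) \<and>
           (\<forall>v. ((0 < v \<and> v < a) \<or> 1 < v) \<longrightarrow> g v a < 0)))"

definition travelling_wave ::
  "(real \<Rightarrow> real \<Rightarrow> real) \<Rightarrow> real \<Rightarrow> real \<Rightarrow> real \<Rightarrow> real \<Rightarrow> (real \<Rightarrow> real) \<Rightarrow> bool" where
  "travelling_wave g a d k c \<Phi> \<longleftrightarrow>
     (\<forall>\<xi>. \<Phi> differentiable (at \<xi>)) \<and>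
     (\<forall>\<xi>. - c * deriv \<Phi> \<xi> =
            d * (k * \<Phi> (\<xi> + 1) - (k + 1) * \<Phi> \<xi> + \<Phi> (\<xi> - 1)) + g (\<Phi> \<xi>) a) \<and>
     (\<Phi> \<longlongrightarrow> 0) at_bot \<and> (\<Phi> \<longlongrightarrow> 1) at_top"

definition J_minus :: "(real \<Rightarrow> real \<Rightarrow> real) \<Rightarrow> real \<Rightarrow> real \<Rightarrow> real \<Rightarrow> real \<Rightarrow> real" where
  "J_minus g a d A k = (SUP v\<in>{0..A}. d * (k + 1) * v - d * k * A - g v a)"

end

theory Submission
  imports Defs
begin

lemma mono_deriv_nonneg:
  fixes \<Phi> :: "real \<Rightarrow> real"
  assumes m: "mono \<Phi>" and d: "(\<Phi> has_real_derivative D) (at x)"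
  shows "0 \<le> D"
proof -
  have "((\<lambda>h. (\<Phi> (x + h) - \<Phi> x) / h) \<longlongrightarrow> D) (at 0)"
    using d by (simp add: DERIV_def)
  then have t: "((\<lambda>h. (\<Phi> (x + h) - \<Phi> x) / h) \<longlongrightarrow> D) (at_right 0)"
    by (rule filterlim_mono) (simp_all add: at_le)
  have "\<forall>h>0. 0 \<le> (\<Phi> (x + h) - \<Phi> x) / h"
    using m by (auto simp: mono_def intro!: divide_nonneg_pos)
  then have "eventually (\<lambda>h. 0 \<le> (\<Phi> (x + h) - \<Phi> x) / h) (at_right 0)"
    by (auto intro: eventually_mono[OF eventually_at_right_less])
  then show ?thesis using t by (intro tendsto_lowerbound) auto
qed

theorem lemma5p1:
  fixes g :: "real \<Rightarrow> real \<Rightarrow> real" and a d k A :: real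
  assumes "Hg g" and "0 < k" and "0 < a" and "a < 1" and "0 < d"
    and "a < A" and "A < 1"
    and "J_minus g a d A k < 0"
  shows "\<forall>c \<Phi>. mono \<Phi> \<and> travelling_wave g a d k c \<Phi> \<longrightarrow> c < 0"
proof (intro allI impI)
  fix c and \<Phi> :: "real \<Rightarrow> real"
  assume H: "mono \<Phi> \<and> travelling_wave g a d k c \<Phi>"
  then have m: "mono \<Phi>" and dif: "\<And>\<xi>. \<Phi> differentiable (at \<xi>)"
    and eq: "\<And>\<xi>. - c * deriv \<Phi> \<xi> =
            d * (k * \<Phi> (\<xi> + 1) - (k + 1) * \<Phi> \<xi> + \<Phi> (\<xi> - 1)) + g (\<Phi> \<xi>) a"
    and l0: "(\<Phi> \<longlongrightarrow> 0) at_bot" and l1: "(\<Phi> \<longlongrightarrow> 1) at_top"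
    unfolding travelling_wave_def by auto
  obtain gu ga where gd: "\<And>u a. a \<in> {0..1} \<Longrightarrow>
           ((\<lambda>p. g (fst p) (snd p)) has_derivative (\<lambda>h. gu u a * fst h + ga u a * snd h))
             (at (u, a) within (UNIV \<times> {0..1}))"
    using assms(1) unfolding Hg_def by blast
  have aa: "a \<in> {0..1}" using assms by auto
  have gcont: "continuous (at v) (\<lambda>v. g v a)" for v
  proof -
    have D1: "((\<lambda>v. (v,a)) has_derivative (\<lambda>y. (y,0))) (at v within UNIV)"
      by (auto intro!: derivative_eq_intros)
    have G: "((\<lambda>p. g (fst p) (snd p)) has_derivative
        (\<lambda>h. gu (fst p) (snd p) * fst h + ga (fst p) (snd p) * snd h)) (at p within UNIV \<times> {0..1})"
      if "p \<in> UNIV \<times> {0..1}" for p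
      using gd[of "snd p" "fst p"] that by auto
    have "((\<lambda>v. (\<lambda>p. g (fst p) (snd p)) (v, a)) has_derivative
           (\<lambda>y. gu v a * fst (y,0::real) + ga v a * snd (y,0::real))) (at v within UNIV)"
      using has_derivative_in_compose2[of "UNIV \<times> {0..1}" "\<lambda>p. g (fst p) (snd p)"
         "\<lambda>p h. gu (fst p) (snd p) * fst h + ga (fst p) (snd p) * snd h" "\<lambda>v. (v,a)" UNIV v "\<lambda>y. (y,0)", OF G _ _ D1]
        aa by fastforce
    then show ?thesis by (auto dest: has_derivative_continuous)
  qed
  have Phinn: "0 \<le> \<Phi> x" for x
  proof (rule tendsto_upperbound[OF l0])
    show "eventually (\<lambda>y. \<Phi> x \<ge> \<Phi> y) at_bot"
      unfolding eventually_at_bot_linorder using m by (auto simp: mono_def)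
  qed simp
  have cont: "continuous_on S \<Phi>" for S
    using dif by (meson continuous_at_imp_continuous_on differentiable_imp_continuous_within)
  obtain x1 where x1: "\<Phi> x1 < A"
  proof -
    have "eventually (\<lambda>y. \<Phi> y < A) at_bot"
      using order_tendstoD(2)[OF l0, of A] assms by auto
    then show ?thesis using that eventually_happens' by (metis eventually_False trivial_limit_at_bot_linorder)
  qed
  obtain x2 where x2: "\<Phi> x2 > A"
  proof -
    have "eventually (\<lambda>y. \<Phi> y > A) at_top"
      using order_tendstoD(1)[OF l1, of A] assms by auto
    then show ?thesis using that by (metis eventually_False eventually_mono trivial_limit_at_top_linorder)
  qed
  have "x1 \<le> x2"
  proof (rule ccontr)
    assume "\<not> x1 \<le> x2"
    then have "\<Phi> x2 \<le> \<Phi> x1" using m by (auto simp: mono_def)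
    then show False using x1 x2 by auto
  qed
  then obtain x0 where x0: "\<Phi> x0 = A"
    using IVT'[of \<Phi> x1 A x2] x1 x2 cont by force
  define \<xi> where "\<xi> = x0 - 1"
  define v where "v = \<Phi> \<xi>"
  have vle: "v \<le> A" using m x0 unfolding v_def \<xi>_def mono_def by (metis diff_le_eq le_add_same_cancel1 zero_le_one)
  have vin: "v \<in> {0..A}" using vle Phinn v_def by auto
  define f where "f = (\<lambda>v. d * (k + 1) * v - d * k * A - g v a)"
  have fc: "continuous_on {0..A} f"
    unfolding f_def using gcont
    by (intro continuous_intros continuous_at_imp_continuous_on) (auto)
  have "bdd_above (f ` {0..A})"
    using compact_continuous_image[OF fc compact_Icc] by (simp add: bounded_imp_bdd_above compact_imp_bounded)
  then have "f v \<le> J_minus g a d A k"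
    unfolding J_minus_def f_def[symmetric] using vin by (intro cSUP_upper) auto
  then have fv: "f v < 0" using assms by linarith
  have rhs: "0 < d * (k * \<Phi> (\<xi> + 1) - (k + 1) * \<Phi> \<xi> + \<Phi> (\<xi> - 1)) + g (\<Phi> \<xi>) a"
  proof -
    have "\<Phi> (\<xi> + 1) = A" using x0 \<xi>_def by simp
    moreover have "0 \<le> d * \<Phi> (\<xi> - 1)" using Phinn assms by auto
    ultimately show ?thesis using fv unfolding f_def v_def by (simp add: algebra_simps)
  qed
  have "0 \<le> deriv \<Phi> \<xi>"
    using mono_deriv_nonneg[OF m] dif DERIV_deriv_iff_real_differentiable by blast
  show "c < 0"
  proof (rule ccontr)
    assume "\<not> c < 0"
    then have "- c * deriv \<Phi> \<xi> \<le> 0" using \<open>0 \<le> deriv \<Phi> \<xi>\<close>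
      by (simp add: mult_nonneg_nonneg)
    then show False using eq[of \<xi>] rhs by linarith
  qed
qed

end
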